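(* Let $G(\mathcal{M})=(R,T;E;c)$ and $G(\mathcal{M}')=(R,T;E;c')$ be two robot-task graphs where $c$ and $c'$ are injective on $E$. Let $\textsc{Auction}(\mathcal{M})=(W=(w_k),a)$ and $\textsc{Auction}(\mathcal{M}')=(W'=(w'_k),a')$. Suppose there exists some edge $e\in E$ which does not appear in $W$ such that $c'(f)=c(f)$ for all $f\in E\setminus\{e\}$. Then $\textsc{Auction}(\mathcal{M})=\textsc{Auction}(\mathcal{M}')$ if and only if $c'(e)>\max_{k\in B_e}c(w_k)$.
   Context: $R$ (robots) and $T$ (tasks) are finite disjoint sets with $R\neq\emptyset$, $|R\sqcup T|\ge3$. The robot-task graph $(R,T;E;c)$ has vertex set $R\sqcup T$, edge set $E$ consisting of all 2-element subsets of $R\sqcup T$, and a non-negative edge cost $c:E\to\mathbb{R}_+$ (with $\mathbb{R}_+=[0,\infty)\cup\{\infty\}$); injective means distinct edges have distinct costs. $\textsc{Auction}$ on $(R,T;E;c)$: set $A=\emptyset$ and $a(r)=0$ for all $r\in R$. For $k=1,\dots,|T|$ (bid rounds): let $w_k=\{s,t\}$ be the edge with $s\in R\cup A$, $t\in T\setminus A$ minimising $c(\{s,t\})$; set $a(t)=k$ and $A\leftarrow A\cup\{t\}$. The output is the list $W=(w_1,\dots,w_{|T|})$ of winning edges and the assignment function $a:R\sqcup T\to\{0,\dots,|T|\}$. Two auction outputs are equal if they have the same list and the same assignment function. For an edge $e=\{x,y\}$, $B_e=\{k\in\mathbb{Z}:\min(a(x),a(y))<k\le\max(a(x),a(y))\}$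 (computed from the output of $\textsc{Auction}(\mathcal{M})$); it is the set of bid rounds of $\textsc{Auction}(\mathcal{M})$ in which $e$ is considered. *)

theory Defs
  imports Main "HOL-Library.Extended_Nonnegative_Real"
begin

definition rt_edges :: "'v set \<Rightarrow> 'v set \<Rightarrow> 'v set set" where
  "rt_edges R T = {e. \<exists>x y. x \<in> R \<union> T \<and> y \<in> R \<union> T \<and> x \<noteq> y \<and> e = {x, y}}"

definition candidates :: "'v set \<Rightarrow> 'v set \<Rightarrow> 'v set \<Rightarrow> 'v set set" where
  "candidates R T A = {{s, t} | s t. s \<in> R \<union> A \<and> t \<in> T - A}"

text \<open>State after k bid rounds: (assigned tasks A, winning edges W, assignment a).\<close>
fun auction_state :: "'v set \<Rightarrow> 'v set \<Rightarrow> ('v set \<Rightarrow> ennreal) \<Rightarrow> nat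
    \<Rightarrow> 'v set \<times> 'v set list \<times> ('v \<Rightarrow> nat)" where
  "auction_state R T c 0 = ({}, [], (\<lambda>_. 0))"
| "auction_state R T c (Suc k) =
     (case auction_state R T c k of (A, W, a) \<Rightarrow>
        let w = arg_min c (\<lambda>e. e \<in> candidates R T A);
            t = (THE t. t \<in> w \<and> t \<in> T - A)
        in (insert t A, W @ [w], a(t := Suc k)))"

definition auction :: "'v set \<Rightarrow> 'v set \<Rightarrow> ('v set \<Rightarrow> ennreal) \<Rightarrow> 'v set list \<times> ('v \<Rightarrow> nat)" where
  "auction R T c = (case auction_state R T c (card T) of (A, W, a) \<Rightarrow> (W, a))"

text \<open>B_e: bid rounds in which edge e = {x,y} is considered.\<close>
definition bid_rounds :: "('v \<Rightarrow> nat) \<Rightarrow> 'v set \<Rightarrow> nat set" where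
  "bid_rounds a e = {k. Min (a ` e) < k \<and> k \<le> Max (a ` e)}"

end

theory Submission imports Defs begin

definition stA where "stA R T c k = fst (auction_state R T c k)"
definition stW where "stW R T c k = fst (snd (auction_state R T c k))"
definition sta where "sta R T c k = snd (snd (auction_state R T c k))"
definition wmin where "wmin R T c k = arg_min c (\<lambda>e. e \<in> candidates R T (stA R T c k))"
definition tnew where "tnew R T c k = (THE t. t \<in> wmin R T c k \<and> t \<in> T - stA R T c k)"

lemma state_eq: "auction_state R T c k = (stA R T c k, stW R T c k, sta R T c k)"
  by (simp add: stA_def stW_def sta_def)

lemma step: "auction_state R T c (Suc k) =
   (insert (tnew R T c k) (stA R T c k), stW R T c k @ [wmin R T c k], (sta R T c k)(tnew R T c k := Suc k))"
  apply (subst auction_state.simps)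
  apply (subst state_eq)
  by (simp add: Let_def wmin_def tnew_def)

lemma stA_Suc: "stA R T c (Suc k) = insert (tnew R T c k) (stA R T c k)"
  using step[of R T c k] by (simp add: stA_def)
lemma stW_Suc: "stW R T c (Suc k) = stW R T c k @ [wmin R T c k]"
  using step[of R T c k] by (simp add: stW_def)
lemma sta_Suc: "sta R T c (Suc k) = (sta R T c k)(tnew R T c k := Suc k)"
  using step[of R T c k] by (simp add: sta_def)
lemma st0: "stA R T c 0 = {}" "stW R T c 0 = []" "sta R T c 0 = (\<lambda>_. 0)"
  by (simp_all add: stA_def stW_def sta_def)

lemma auction_eq: "auction R T c = (stW R T c (card T), sta R T c (card T))"
  unfolding auction_def by (subst state_eq) simp

lemma cand_sub: "A \<subseteq> T \<Longrightarrow> R \<inter> T = {} \<Longrightarrow> candidates R T A \<subseteq> rt_edges R T"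
  unfolding candidates_def rt_edges_def by blast

lemma cand_fin: "finite R \<Longrightarrow> finite T \<Longrightarrow> A \<subseteq> T \<Longrightarrow> finite (candidates R T A)"
proof -
  assume "finite R" "finite T" "A \<subseteq> T"
  then have "finite (Pow (R \<union> T))" by simp
  moreover have "candidates R T A \<subseteq> Pow (R \<union> T)" using \<open>A \<subseteq> T\<close> unfolding candidates_def by auto
  ultimately show ?thesis by (rule finite_subset[rotated])
qed

lemma cand_ne: "R \<noteq> {} \<Longrightarrow> T - A \<noteq> {} \<Longrightarrow> candidates R T A \<noteq> {}"
  unfolding candidates_def by blast

lemma amin:
  fixes c :: "'a \<Rightarrow> 'b::linorder"
  assumes "finite C" "C \<noteq> {}" "inj_on c C"
  shows "arg_min c (\<lambda>e. e \<in> C) \<in> C \<and> (\<forall>f\<in>C. f \<noteq> arg_min c (\<lambda>e. e \<in> C) \<longrightarrow> c (arg_min c (\<lambda>e. e \<in> C)) < c f)"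
proof -
  obtain x where "is_arg_min c (\<lambda>e. e \<in> C) x" using ex_is_arg_min_if_finite[OF assms(1,2)] by blast
  then have h: "is_arg_min c (\<lambda>e. e \<in> C) (arg_min c (\<lambda>e. e \<in> C))" unfolding arg_min_def by (rule someI)
  show ?thesis
  proof
    show "arg_min c (\<lambda>e. e \<in> C) \<in> C" using h by (simp add: is_arg_min_def)
    show "\<forall>f\<in>C. f \<noteq> arg_min c (\<lambda>e. e \<in> C) \<longrightarrow> c (arg_min c (\<lambda>e. e \<in> C)) < c f"
      using h assms(3) unfolding is_arg_min_def inj_on_def by (metis linorder_neqE)
  qed
qed

lemma amin_eq:
  fixes c :: "'a \<Rightarrow> 'b::linorder"
  assumes "w \<in> C" "\<forall>f\<in>C. f \<noteq> w \<longrightarrow> c w < c f"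
  shows "arg_min c (\<lambda>e. e \<in> C) = w"
  unfolding arg_min_def
proof (rule some_equality)
  show "is_arg_min c (\<lambda>e. e \<in> C) w" using assms unfolding is_arg_min_def by force
  fix x assume "is_arg_min c (\<lambda>e. e \<in> C) x" then show "x = w" using assms unfolding is_arg_min_def by blast
qed

lemma the_t:
  assumes "A \<subseteq> T" "R \<inter> T = {}" "w \<in> candidates R T A"
  shows "(THE t. t \<in> w \<and> t \<in> T - A) \<in> T - A \<and> (THE t. t \<in> w \<and> t \<in> T - A) \<in> w"
proof -
  obtain s t where w: "w = {s,t}" "s \<in> R \<union> A" "t \<in> T - A" using assms(3) unfolding candidates_def by blast
  have "(THE t. t \<in> w \<and> t \<in> T - A) = t"
    by (rule the_equality) (use w assms in auto)
  then show ?thesis using w by simp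
qed


context
  fixes R T :: "'v set" and c :: "'v set \<Rightarrow> ennreal"
  assumes fR: "finite R" and fT: "finite T" and dj: "R \<inter> T = {}" and ne: "R \<noteq> {}"
    and ic: "inj_on c (rt_edges R T)"
begin

lemma round_aux:
  assumes "stA R T c k \<subseteq> T" "card (stA R T c k) < card T"
  shows "wmin R T c k \<in> candidates R T (stA R T c k) \<and>
    (\<forall>f\<in>candidates R T (stA R T c k). f \<noteq> wmin R T c k \<longrightarrow> c (wmin R T c k) < c f) \<and>
    tnew R T c k \<in> T - stA R T c k \<and> tnew R T c k \<in> wmin R T c k"
proof -
  let ?C = "candidates R T (stA R T c k)"
  have "T - stA R T c k \<noteq> {}"
  proof
    assume "T - stA R T c k = {}"
    then have "stA R T c k = T" using assms(1) by blast
    then show False using assms(2) by simp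
  qed
  then have n1: "?C \<noteq> {}" by (rule cand_ne[OF ne])
  have n2: "finite ?C" by (rule cand_fin[OF fR fT assms(1)])
  have n3: "inj_on c ?C" using inj_on_subset[OF ic cand_sub[OF assms(1) dj]] .
  have h: "wmin R T c k \<in> ?C \<and> (\<forall>f\<in>?C. f \<noteq> wmin R T c k \<longrightarrow> c (wmin R T c k) < c f)"
    unfolding wmin_def by (rule amin[OF n2 n1 n3])
  moreover have "tnew R T c k \<in> T - stA R T c k \<and> tnew R T c k \<in> wmin R T c k"
    unfolding tnew_def by (rule the_t[OF assms(1) dj]) (use h in blast)
  ultimately show ?thesis by blast
qed

lemma inv: "k \<le> card T \<Longrightarrow> stA R T c k \<subseteq> T \<and> card (stA R T c k) = k \<and> length (stW R T c k) = k \<and>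
   (\<forall>x. x \<notin> stA R T c k \<longrightarrow> sta R T c k x = 0) \<and> (\<forall>x\<in>stA R T c k. 1 \<le> sta R T c k x \<and> sta R T c k x \<le> k)"
proof (induction k)
  case 0
  then show ?case by (simp add: st0)
next
  case (Suc k)
  then have IH: "stA R T c k \<subseteq> T" "card (stA R T c k) = k" "length (stW R T c k) = k"
    "\<forall>x. x \<notin> stA R T c k \<longrightarrow> sta R T c k x = 0" "\<forall>x\<in>stA R T c k. 1 \<le> sta R T c k x \<and> sta R T c k x \<le> k"
    by auto
  have r: "tnew R T c k \<in> T - stA R T c k" using round_aux[OF IH(1)] IH(2) Suc.prems by (simp add: Suc_le_lessD)
  have fA: "finite (stA R T c k)" using IH(1) fT finite_subset by blast
  have c1: "insert (tnew R T c k) (stA R T c k) \<subseteq> T" using IH(1) r by blast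
  have c2: "card (insert (tnew R T c k) (stA R T c k)) = Suc k" using IH(2) r fA by simp
  have c4: "\<forall>x. x \<notin> insert (tnew R T c k) (stA R T c k) \<longrightarrow> ((sta R T c k)(tnew R T c k := Suc k)) x = 0"
    using IH(4) by simp
  have c5: "\<forall>x\<in>insert (tnew R T c k) (stA R T c k). 1 \<le> ((sta R T c k)(tnew R T c k := Suc k)) x \<and> ((sta R T c k)(tnew R T c k := Suc k)) x \<le> Suc k"
    using IH(5) by (simp add: le_SucI)
  show ?case unfolding stA_Suc stW_Suc sta_Suc using c1 c2 c4 c5 IH(3) by simp
qed

lemma round: "k < card T \<Longrightarrow> wmin R T c k \<in> candidates R T (stA R T c k) \<and>
    (\<forall>f\<in>candidates R T (stA R T c k). f \<noteq> wmin R T c k \<longrightarrow> c (wmin R T c k) < c f) \<and>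
    tnew R T c k \<in> T - stA R T c k \<and> tnew R T c k \<in> wmin R T c k"
  using round_aux[of k] inv[of k] by simp

lemma mono: "k \<le> m \<Longrightarrow> m \<le> card T \<Longrightarrow> stA R T c k \<subseteq> stA R T c m \<and> take k (stW R T c m) = stW R T c k \<and>
   (\<forall>x\<in>stA R T c k. sta R T c m x = sta R T c k x) \<and> (\<forall>x\<in>stA R T c m - stA R T c k. k < sta R T c m x)"
proof (induction m)
  case 0
  then show ?case using inv[of 0] by simp
next
  case (Suc m)
  show ?case
  proof (cases "k = Suc m")
    case True
    then show ?thesis using inv[of k] Suc.prems by simp
  next
    case False
    then have km: "k \<le> m" and mT: "m < card T" using Suc.prems by auto
    have r: "tnew R T c m \<in> T - stA R T c m" using round[of m] mT by simp
    have l: "length (stW R T c m) = m" using inv[of m] mT by simp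
    have IH: "stA R T c k \<subseteq> stA R T c m" "take k (stW R T c m) = stW R T c k"
     "\<forall>x\<in>stA R T c k. sta R T c m x = sta R T c k x" "\<forall>x\<in>stA R T c m - stA R T c k. k < sta R T c m x"
      using Suc.IH km mT by auto
    have c1: "stA R T c k \<subseteq> insert (tnew R T c m) (stA R T c m)" using IH(1) by blast
    have c2: "take k (stW R T c m @ [wmin R T c m]) = stW R T c k" using IH(2) l km by simp
    have c3: "\<forall>x\<in>stA R T c k. ((sta R T c m)(tnew R T c m := Suc m)) x = sta R T c k x"
      using IH(1,3) r by auto
    have c4: "\<forall>x\<in>insert (tnew R T c m) (stA R T c m) - stA R T c k. k < ((sta R T c m)(tnew R T c m := Suc m)) x"
      using IH(4) km by auto
    show ?thesis unfolding stA_Suc stW_Suc sta_Suc using c1 c2 c3 c4 by blast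
  qed
qed

lemma final: "stA R T c (card T) = T"
  using inv[of "card T"] fT card_subset_eq by blast

lemma Wnth: "k < card T \<Longrightarrow> stW R T c (card T) ! k = wmin R T c k"
proof -
  assume k: "k < card T"
  have "take (Suc k) (stW R T c (card T)) = stW R T c k @ [wmin R T c k]"
    using mono[of "Suc k" "card T"] k by (simp add: stW_Suc)
  moreover have "length (stW R T c k) = k" using inv k by simp
  ultimately show ?thesis by (metis k inv[of "card T"] le_refl lessI nth_append_length nth_take)
qed

lemma classify:
  assumes k: "k < card T" and z: "z \<in> R \<union> T"
  shows "(z \<in> R \<union> stA R T c k \<longleftrightarrow> sta R T c (card T) z \<le> k) \<and>
         (z \<in> T - stA R T c k \<longleftrightarrow> k < sta R T c (card T) z)"
proof -
  have iv: "\<forall>x. x \<notin> T \<longrightarrow> sta R T c (card T) x = 0" using inv[of "card T"] final by simp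
  have mo: "\<forall>x\<in>stA R T c k. sta R T c (card T) x = sta R T c k x"
     "\<forall>x\<in>T - stA R T c k. k < sta R T c (card T) x" "stA R T c k \<subseteq> T"
    using mono[of k "card T"] k final by auto
  have ik: "\<forall>x\<in>stA R T c k. sta R T c k x \<le> k" using inv[of k] k by simp
  show ?thesis
  proof (cases "z \<in> R")
    case True
    then have "z \<notin> T" using dj by blast
    then show ?thesis using True iv mo(3) by auto
  next
    case False
    then have zT: "z \<in> T" using z by blast
    show ?thesis
    proof (cases "z \<in> stA R T c k")
      case True
      then show ?thesis using mo(1) ik by auto
    next
      case False
      then have "k < sta R T c (card T) z" using mo(2) zT by blast
      then show ?thesis using False zT \<open>z \<notin> R\<close> by auto
    qed
  qed
qed

lemma candB:
  assumes k: "k < card T" and e: "e \<in> rt_edges R T"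
  shows "e \<in> candidates R T (stA R T c k) \<longleftrightarrow> Suc k \<in> bid_rounds (sta R T c (card T)) e"
proof -
  obtain x y where xy: "e = {x,y}" "x \<noteq> y" "x \<in> R \<union> T" "y \<in> R \<union> T"
    using e unfolding rt_edges_def by blast
  let ?a = "sta R T c (card T)"
  let ?A = "stA R T c k"
  have cx: "(x \<in> R \<union> ?A \<longleftrightarrow> ?a x \<le> k) \<and> (x \<in> T - ?A \<longleftrightarrow> k < ?a x)" using classify k xy(3) by blast
  have cy: "(y \<in> R \<union> ?A \<longleftrightarrow> ?a y \<le> k) \<and> (y \<in> T - ?A \<longleftrightarrow> k < ?a y)" using classify k xy(4) by blast
  have "e \<in> candidates R T ?A \<longleftrightarrow> (x \<in> R \<union> ?A \<and> y \<in> T - ?A) \<or> (y \<in> R \<union> ?A \<and> x \<in> T - ?A)"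
    unfolding xy(1) candidates_def by (auto simp: doubleton_eq_iff)
  also have "\<dots> \<longleftrightarrow> (?a x \<le> k \<and> k < ?a y) \<or> (?a y \<le> k \<and> k < ?a x)" using cx cy by blast
  also have "\<dots> \<longleftrightarrow> Suc k \<in> bid_rounds ?a e"
    unfolding bid_rounds_def xy(1) by auto
  finally show ?thesis .
qed

end


lemma agree:
  "(\<forall>j<k. arg_min c' (\<lambda>f. f \<in> candidates R T (stA R T c j)) = wmin R T c j) \<Longrightarrow>
   auction_state R T c k = auction_state R T c' k"
proof (induction k)
  case 0
  then show ?case by simp
next
  case (Suc k)
  then have IH: "auction_state R T c k = auction_state R T c' k" by simp
  then have eq: "stA R T c' k = stA R T c k" "stW R T c' k = stW R T c k" "sta R T c' k = sta R T c k"
    by (simp_all add: stA_def stW_def sta_def)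
  have w: "wmin R T c' k = wmin R T c k" using Suc.prems eq(1) unfolding wmin_def by simp
  have t: "tnew R T c' k = tnew R T c k" unfolding tnew_def w eq(1) ..
  show ?case unfolding step eq w t ..
qed

theorem lemma6:
  fixes R T :: "'v set" and c c' :: "'v set \<Rightarrow> ennreal" and e :: "'v set"
  assumes "finite R" and "finite T" and "R \<inter> T = {}" and "R \<noteq> {}"
    and "card (R \<union> T) \<ge> 3"
    and "inj_on c (rt_edges R T)" and "inj_on c' (rt_edges R T)"
    and "e \<in> rt_edges R T"
    and "e \<notin> set (fst (auction R T c))"
    and "\<forall>f \<in> rt_edges R T - {e}. c' f = c f"
  shows "auction R T c = auction R T c' \<longleftrightarrow>
    (let (W, a) = auction R T c; B = bid_rounds a e in
      B = {} \<or> Max ((\<lambda>k. c (W ! (k - 1))) ` B) < c' e)"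
proof -
  note fR = assms(1) and fT = assms(2) and dj = assms(3) and ne = assms(4) and ic = assms(6)
    and ic' = assms(7) and eE = assms(8) and cc = assms(10)
  define n where "n = card T"
  define Wn where "Wn = stW R T c n"
  define an where "an = sta R T c n"
  define B where "B = bid_rounds an e"
  define C where "C j = candidates R T (stA R T c j)" for j
  define w where "w j = wmin R T c j" for j
  have eW: "e \<notin> set Wn" using assms(9) unfolding auction_eq Wn_def n_def by simp
  have lenW: "length Wn = n" using inv[OF fR fT dj ne ic, of n] unfolding Wn_def n_def by simp
  have Wnth': "Wn ! j = w j" if "j < n" for j
    using Wnth[OF fR fT dj ne ic] that unfolding Wn_def w_def n_def by simp
  have rd: "w j \<in> C j \<and> (\<forall>f\<in>C j. f \<noteq> w j \<longrightarrow> c (w j) < c f)" if "j < n" for j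
    using round[OF fR fT dj ne ic, of j] that unfolding C_def w_def n_def by simp
  have CE: "C j \<subseteq> rt_edges R T" if "j < n" for j
    using cand_sub[OF _ dj] inv[OF fR fT dj ne ic, of j] that unfolding C_def n_def by simp
  have wne: "w j \<noteq> e" if "j < n" for j
    using eW Wnth'[OF that] lenW that by (metis nth_mem)
  have wE: "w j \<in> rt_edges R T" if "j < n" for j using rd[OF that] CE[OF that] by blast
  have cw: "c' (w j) = c (w j)" if "j < n" for j using cc wE[OF that] wne[OF that] by blast
  have neq: "c' e \<noteq> c (w j)" if "j < n" for j
    using ic' wE[OF that] wne[OF that] eE cw[OF that] unfolding inj_on_def by metis
  have key_a: "arg_min c' (\<lambda>f. f \<in> C j) = w j" if j: "j < n" and h: "e \<notin> C j \<or> c (w j) < c' e" for j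
  proof (rule amin_eq)
    show "w j \<in> C j" using rd[OF j] by blast
    show "\<forall>f\<in>C j. f \<noteq> w j \<longrightarrow> c' (w j) < c' f"
    proof (intro ballI impI)
      fix f assume f: "f \<in> C j" "f \<noteq> w j"
      show "c' (w j) < c' f"
      proof (cases "f = e")
        case True
        then show ?thesis using h f cw[OF j] by auto
      next
        case False
        then have "c' f = c f" using cc f CE[OF j] by blast
        then show ?thesis using rd[OF j] f cw[OF j] by simp
      qed
    qed
  qed
  have key_b: "arg_min c' (\<lambda>f. f \<in> C j) = e" if j: "j < n" and h: "e \<in> C j" "c' e < c (w j)" for j
  proof (rule amin_eq)
    show "e \<in> C j" using h by blast
    show "\<forall>f\<in>C j. f \<noteq> e \<longrightarrow> c' e < c' f"
    proof (intro ballI impI)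
      fix f assume f: "f \<in> C j" "f \<noteq> e"
      then have "c' f = c f" using cc f CE[OF j] by blast
      moreover have "c (w j) \<le> c f" using rd[OF j] f by (cases "f = w j") (auto intro: less_imp_le)
      ultimately show "c' e < c' f" using h by simp
    qed
  qed
  have cB: "e \<in> C j \<longleftrightarrow> Suc j \<in> B" if "j < n" for j
    using candB[OF fR fT dj ne ic, of j e] that eE unfolding C_def B_def an_def n_def by simp
  have finB: "finite B"
  proof -
    have "B \<subseteq> {..Max (an ` e)}" unfolding B_def bid_rounds_def by auto
    then show ?thesis using finite_subset by blast
  qed
  have rhs: "(let (W, a) = auction R T c; B = bid_rounds a e in
      B = {} \<or> Max ((\<lambda>k. c (W ! (k - 1))) ` B) < c' e) \<longleftrightarrow>
      (B = {} \<or> Max ((\<lambda>k. c (Wn ! (k - 1))) ` B) < c' e)"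
    unfolding auction_eq Wn_def an_def B_def n_def by (simp add: Let_def)
  have aeq: "auction R T c = auction R T c' \<longleftrightarrow> stW R T c n = stW R T c' n \<and> sta R T c n = sta R T c' n"
    unfolding auction_eq n_def by simp
  show ?thesis
    unfolding rhs aeq
  proof
    assume "stW R T c n = stW R T c' n \<and> sta R T c n = sta R T c' n"
    then have Weq: "stW R T c' n = Wn" unfolding Wn_def by simp
    show "B = {} \<or> Max ((\<lambda>k. c (Wn ! (k - 1))) ` B) < c' e"
    proof (rule ccontr)
      assume "\<not> (B = {} \<or> Max ((\<lambda>k. c (Wn ! (k - 1))) ` B) < c' e)"
      then have Bne: "B \<noteq> {}" and le: "c' e \<le> Max ((\<lambda>k. c (Wn ! (k - 1))) ` B)" by auto
      obtain k where k: "k \<in> B" "Max ((\<lambda>k. c (Wn ! (k - 1))) ` B) = c (Wn ! (k - 1))"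
      proof -
        have "Max ((\<lambda>k. c (Wn ! (k - 1))) ` B) \<in> (\<lambda>k. c (Wn ! (k - 1))) ` B"
          using finB Bne by (intro Max_in) auto
        then show ?thesis using that by auto
      qed
      obtain x y where xy: "e = {x,y}" using eE unfolding rt_edges_def by blast
      have anle: "an z \<le> n" for z
        using inv[OF fR fT dj ne ic, of n] unfolding an_def n_def by (cases "z \<in> stA R T c (card T)") auto
      have k1: "1 \<le> k" and kn: "k \<le> n" using k(1) anle unfolding B_def bid_rounds_def xy
        by (auto simp: max_def split: if_splits intro: le_trans)
      define j where "j = k - 1"
      have j: "j < n" "Suc j = k" using k1 kn unfolding j_def by auto
      have P: "j < n \<and> e \<in> C j \<and> c' e < c (w j)"
        using j cB[OF j(1)] k le Wnth'[OF j(1)] neq[OF j(1)] unfolding j_def by (auto simp: order_le_less)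
      define j0 where "j0 = (LEAST j. j < n \<and> e \<in> C j \<and> c' e < c (w j))"
      have P0: "j0 < n \<and> e \<in> C j0 \<and> c' e < c (w j0)" unfolding j0_def by (rule LeastI[of _ j]) (rule P)
      have before: "\<forall>i<j0. arg_min c' (\<lambda>f. f \<in> candidates R T (stA R T c i)) = wmin R T c i"
      proof (intro allI impI)
        fix i assume i: "i < j0"
        then have np: "\<not> (i < n \<and> e \<in> C i \<and> c' e < c (w i))" unfolding j0_def by (rule not_less_Least)
        have "i < n" using i P0 by simp
        then have "e \<notin> C i \<or> c (w i) < c' e" using np neq[of i] by (auto simp: order_neq_le_trans order.not_eq_order_implies_strict not_less)
        then show "arg_min c' (\<lambda>f. f \<in> candidates R T (stA R T c i)) = wmin R T c i"
          using key_a[OF \<open>i < n\<close>] unfolding C_def w_def by simp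
      qed
      have "auction_state R T c j0 = auction_state R T c' j0" by (rule agree) (rule before)
      then have "stA R T c' j0 = stA R T c j0" by (simp add: stA_def)
      then have "wmin R T c' j0 = e" using key_b[of j0] P0 unfolding wmin_def C_def by simp
      then have "stW R T c' n ! j0 = e" using Wnth[OF fR fT dj ne ic', of j0] P0 unfolding n_def by simp
      then have "e \<in> set Wn" using Weq lenW P0 by (metis nth_mem)
      then show False using eW by simp
    qed
  next
    assume h: "B = {} \<or> Max ((\<lambda>k. c (Wn ! (k - 1))) ` B) < c' e"
    have "\<forall>j<n. arg_min c' (\<lambda>f. f \<in> candidates R T (stA R T c j)) = wmin R T c j"
    proof (intro allI impI)
      fix j assume j: "j < n"
      have "e \<notin> C j \<or> c (w j) < c' e"
      proof (cases "e \<in> C j")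
        case True
        then have jB: "Suc j \<in> B" using cB[OF j] by simp
        then have "c (Wn ! (Suc j - 1)) \<le> Max ((\<lambda>k. c (Wn ! (k - 1))) ` B)"
          using finB imageI[OF jB, of "\<lambda>k. c (Wn ! (k - 1))"] by (intro Max_ge) auto
        then have "c (w j) \<le> Max ((\<lambda>k. c (Wn ! (k - 1))) ` B)" using Wnth'[OF j] by simp
        then show ?thesis using h jB by auto
      qed simp
      then show "arg_min c' (\<lambda>f. f \<in> candidates R T (stA R T c j)) = wmin R T c j"
        using key_a[OF j] unfolding C_def w_def by simp
    qed
    then have "auction_state R T c n = auction_state R T c' n" by (rule agree)
    then show "stW R T c n = stW R T c' n \<and> sta R T c n = sta R T c' n" by (simp add: stW_def sta_def)
  qed
qed

end
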